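(* Let $f$ be a probability density on $\mathbb{R}^p$ with $\int_{\mathbb{R}^p}\|x\|f(x)\,dx<\infty$, let $K(x)=(2\pi)^{-p/2}e^{-\|x\|^2/2}$, $K_\epsilon(x)=\epsilon^{-p}K(x/\epsilon)$ for fixed $\epsilon>0$, $f_\epsilon=f*K_\epsilon$ with $\nabla f_\epsilon(m)=\int_{\mathbb{R}^p}\nabla K_\epsilon(m-t)f(t)\,dt$, and $\lambda>0$. Define $$h_\infty(m)=\lim_{c\to\infty}\frac{\nabla f_\epsilon(cm)-\lambda cm}{c},\qquad m\in\mathbb{R}^p.$$ Then this limit exists for every $m$, and the ODE $\dot m(t)=h_\infty(m(t))$ has the origin as its unique globally asymptotically stable equilibrium point.
   Context: The convolution is $(u*v)(x)=\int_{\mathbb{R}^p}u(x-t)v(t)\,dt$. *)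

theory Defs
  imports "HOL-Analysis.Analysis"
begin

definition gaussK :: "'a::euclidean_space \<Rightarrow> real" where
  "gaussK x = (2 * pi) powr (- real DIM('a) / 2) * exp (- ((norm x)^2) / 2)"

definition gaussK_eps :: "real \<Rightarrow> 'a::euclidean_space \<Rightarrow> real" where
  "gaussK_eps eps x = eps powr (- real DIM('a)) * gaussK (x /\<^sub>R eps)"

definition grad_K_eps :: "real \<Rightarrow> 'a::euclidean_space \<Rightarrow> 'a" where
  "grad_K_eps eps x = (THE g. GDERIV (gaussK_eps eps) x :> g)"

definition grad_f_eps :: "real \<Rightarrow> ('a::euclidean_space \<Rightarrow> real) \<Rightarrow> 'a \<Rightarrow> 'a" where
  "grad_f_eps eps f m = (\<integral>t. f t *\<^sub>R grad_K_eps eps (m - t) \<partial>lborel)"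

definition h_inf :: "real \<Rightarrow> real \<Rightarrow> ('a::euclidean_space \<Rightarrow> real) \<Rightarrow> 'a \<Rightarrow> 'a" where
  "h_inf eps lam f m =
     Lim at_top (\<lambda>c::real. (grad_f_eps eps f (c *\<^sub>R m) - (lam * c) *\<^sub>R m) /\<^sub>R c)"

definition ode_solution :: "('a::real_normed_vector \<Rightarrow> 'a) \<Rightarrow> (real \<Rightarrow> 'a) \<Rightarrow> bool" where
  "ode_solution h m \<longleftrightarrow> (\<forall>t\<ge>0. (m has_vector_derivative h (m t)) (at t within {0..}))"

definition equilibrium :: "('a::real_normed_vector \<Rightarrow> 'a) \<Rightarrow> 'a \<Rightarrow> bool" where
  "equilibrium h x \<longleftrightarrow> h x = 0"

definition lyapunov_stable :: "('a::real_normed_vector \<Rightarrow> 'a) \<Rightarrow> 'a \<Rightarrow> bool" where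
  "lyapunov_stable h x0 \<longleftrightarrow>
     (\<forall>e>0. \<exists>d>0. \<forall>m. ode_solution h m \<and> dist (m 0) x0 < d \<longrightarrow> (\<forall>t\<ge>0. dist (m t) x0 < e))"

definition globally_attractive :: "('a::real_normed_vector \<Rightarrow> 'a) \<Rightarrow> 'a \<Rightarrow> bool" where
  "globally_attractive h x0 \<longleftrightarrow> (\<forall>m. ode_solution h m \<longrightarrow> (m \<longlongrightarrow> x0) at_top)"

definition globally_asymp_stable_eq :: "('a::real_normed_vector \<Rightarrow> 'a) \<Rightarrow> 'a \<Rightarrow> bool" where
  "globally_asymp_stable_eq h x0 \<longleftrightarrow>
     equilibrium h x0 \<and> lyapunov_stable h x0 \<and> globally_attractive h x0 \<and>
     (\<forall>y. \<exists>m. ode_solution h m \<and> m 0 = y)"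

end

theory Submission
  imports Defs
begin

lemma gaussK_eps_eq:
  fixes x :: "'a::euclidean_space"
  assumes "eps > 0"
  shows "gaussK_eps eps x = (eps powr (- real DIM('a)) * (2 * pi) powr (- real DIM('a) / 2)) * exp (- (x \<bullet> x) / (2 * eps^2))"
proof -
  have "(norm (x /\<^sub>R eps))^2 = (x \<bullet> x) / eps^2"
    using assms by (simp add: power2_norm_eq_inner[symmetric] power_mult_distrib field_simps)
  then show ?thesis by (simp add: gaussK_eps_def gaussK_def)
qed

lemma gaussK_eps_gderiv:
  fixes x :: "'a::euclidean_space"
  assumes ep: "eps > 0"
  defines "A \<equiv> eps powr (- real DIM('a)) * (2 * pi) powr (- real DIM('a) / 2)"
  shows "GDERIV (gaussK_eps eps) x :> ((- A / eps^2 * exp (- (x \<bullet> x) / (2 * eps^2))) *\<^sub>R x)"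
proof -
  have e: "gaussK_eps eps = (\<lambda>x::'a. A * exp (- (x \<bullet> x) / (2 * eps^2)))"
    using gaussK_eps_eq[OF ep] unfolding A_def by auto
  show ?thesis unfolding e gderiv_def
    apply (rule has_derivative_eq_rhs, (rule derivative_intros)+)
    using ep apply simp
    apply (rule ext)
    apply (simp add: inner_scaleR_right)
    subgoal for h
    proof -
      have "x \<bullet> h = h \<bullet> x" by (rule inner_commute)
      then show ?thesis using ep by (simp add: power2_eq_square)
    qed
    done
qed

lemma grad_K_eps_eq:
  fixes x :: "'a::euclidean_space"
  assumes "eps > 0"
  shows "grad_K_eps eps x = ((- (eps powr (- real DIM('a)) * (2 * pi) powr (- real DIM('a) / 2)) / eps^2 * exp (- (x \<bullet> x) / (2 * eps^2))) *\<^sub>R x)"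
  unfolding grad_K_eps_def
proof (rule the_equality)
  fix g assume "GDERIV (gaussK_eps eps) x :> g"
  from has_derivative_unique[OF this[unfolded gderiv_def] gaussK_eps_gderiv[OF assms, unfolded gderiv_def]]
  have "(\<lambda>h. h \<bullet> g) = (\<lambda>h. h \<bullet> ((- (eps powr (- real DIM('a)) * (2 * pi) powr (- real DIM('a) / 2)) / eps^2 * exp (- (x \<bullet> x) / (2 * eps^2))) *\<^sub>R x))" by simp
  then show "g = ((- (eps powr (- real DIM('a)) * (2 * pi) powr (- real DIM('a) / 2)) / eps^2 * exp (- (x \<bullet> x) / (2 * eps^2))) *\<^sub>R x)"
    by (subst vector_eq_ldot[symmetric]) (metis)
qed (use gaussK_eps_gderiv[OF assms] in simp)


lemma xexp_bound:
  fixes r eps :: real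
  assumes "eps > 0" "r \<ge> 0"
  shows "r * exp (- (r^2) / (2 * eps^2)) \<le> eps"
proof -
  define a where "a = r / eps"
  have "0 \<le> (a - 1)^2" by simp
  hence "0 \<le> a^2 - 2*a + 1" by (simp add: power2_diff)
  hence "a \<le> 1 + a^2/2" by linarith
  also have "\<dots> \<le> exp (a^2/2)" using exp_ge_add_one_self[of "a^2/2"] by simp
  finally have "a \<le> exp (a^2/2)" .
  moreover have "a^2/2 = r^2/(2*eps^2)" using assms unfolding a_def by (simp add: power_divide)
  ultimately have "r / eps \<le> exp (r^2/(2*eps^2))" unfolding a_def by simp
  hence "r \<le> eps * exp (r^2/(2*eps^2))" using assms by (simp add: divide_le_eq mult.commute)
  hence "r * exp (- (r^2) / (2 * eps^2)) \<le> eps * exp (r^2/(2*eps^2)) * exp (- (r^2) / (2 * eps^2))"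
    by (simp add: mult_right_mono)
  also have "\<dots> = eps" by (simp add: mult.assoc exp_add[symmetric])
  finally show ?thesis .
qed

lemma grad_K_eps_bound:
  fixes x :: "'a::euclidean_space"
  assumes ep: "eps > 0"
  shows "norm (grad_K_eps eps x) \<le> (eps powr (- real DIM('a)) * (2 * pi) powr (- real DIM('a) / 2)) / eps"
proof -
  define A where "A = eps powr (- real DIM('a)) * (2 * pi) powr (- real DIM('a) / 2)"
  have A: "A > 0" unfolding A_def using ep by simp
  have "norm (grad_K_eps eps x) = A / eps^2 * (norm x * exp (- (norm x ^2) / (2 * eps^2)))"
    unfolding grad_K_eps_eq[OF ep] A_def[symmetric] using A ep
    by (simp add: power2_norm_eq_inner abs_mult)
  also have "\<dots> \<le> A / eps^2 * eps"
    using xexp_bound[OF ep norm_ge_zero] A ep by (intro mult_left_mono) auto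
  also have "\<dots> = A / eps" using ep by (simp add: power2_eq_square)
  finally show ?thesis unfolding A_def .
qed

lemma grad_K_eps_meas:
  assumes ep: "eps > 0"
  shows "(grad_K_eps eps :: 'a::euclidean_space \<Rightarrow> 'a) \<in> borel_measurable borel"
proof -
  have e: "grad_K_eps eps = (\<lambda>x::'a. (- (eps powr (- real DIM('a)) * (2 * pi) powr (- real DIM('a) / 2)) / eps^2 * exp (- (x \<bullet> x) / (2 * eps^2))) *\<^sub>R x)"
    using grad_K_eps_eq[OF ep] by auto
  show ?thesis unfolding e
    using ep by (intro borel_measurable_continuous_onI continuous_intros) auto
qed

lemma grad_f_eps_bound:
  fixes f :: "'a::euclidean_space \<Rightarrow> real"
  assumes f_nonneg: "\<And>x. f x \<ge> 0"
    and f_int: "integrable lborel f"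
    and f_total: "(\<integral>x. f x \<partial>lborel) = 1"
    and ep: "eps > 0"
  shows "norm (grad_f_eps eps f m) \<le> (eps powr (- real DIM('a)) * (2 * pi) powr (- real DIM('a) / 2)) / eps"
proof -
  define B where "B = (eps powr (- real DIM('a)) * (2 * pi) powr (- real DIM('a) / 2)) / eps"
  have bnd: "norm (f t *\<^sub>R grad_K_eps eps (m - t)) \<le> B * f t" for t
  proof -
    have "norm (grad_K_eps eps (m - t)) \<le> B" unfolding B_def by (rule grad_K_eps_bound[OF ep])
    then show ?thesis using f_nonneg[of t] by (simp add: mult_left_mono mult.commute[of B])
  qed
  have fm: "f \<in> borel_measurable lborel" using f_int by auto
  have gm: "(\<lambda>t. grad_K_eps eps (m - t)) \<in> borel_measurable lborel"
    using measurable_compose[OF _ grad_K_eps_meas[OF ep], of "\<lambda>t. m - t" lborel] by auto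
  have meas: "(\<lambda>t. f t *\<^sub>R grad_K_eps eps (m - t)) \<in> borel_measurable lborel"
    using fm gm by measurable
  have int2: "integrable lborel (\<lambda>t. B * f t)" using f_int by auto
  have int1: "integrable lborel (\<lambda>t. f t *\<^sub>R grad_K_eps eps (m - t))"
    by (rule Bochner_Integration.integrable_bound[OF int2 meas]) (rule AE_I2, rule order_trans[OF bnd], simp)
  have "norm (grad_f_eps eps f m) \<le> (\<integral>t. B * f t \<partial>lborel)"
    unfolding grad_f_eps_def by (rule Bochner_Integration.integral_norm_bound_integral[OF int1 int2 bnd])
  also have "\<dots> = B" using f_total by simp
  finally show ?thesis unfolding B_def .
qed


lemma lin_ode_sol:
  fixes m :: "real \<Rightarrow> 'a::real_normed_vector"
  assumes sol: "ode_solution (\<lambda>x. - lam *\<^sub>R x) m" and t: "t \<ge> 0"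
  shows "m t = exp (- (lam * t)) *\<^sub>R m 0"
proof -
  define g where "g = (\<lambda>s. exp (lam * s) *\<^sub>R m s)"
  have "(g has_derivative (\<lambda>h. 0)) (at s within {0..})" if s: "s \<in> {0..}" for s
  proof -
    have md: "(m has_vector_derivative (- lam *\<^sub>R m s)) (at s within {0..})"
      using sol s unfolding ode_solution_def by auto
    have ed: "((\<lambda>s. exp (lam * s)) has_field_derivative (exp (lam * s) * lam)) (at s within {0..})"
      by (auto intro!: derivative_eq_intros)
    have "(g has_vector_derivative (exp (lam * s) *\<^sub>R (- lam *\<^sub>R m s) + (exp (lam * s) * lam) *\<^sub>R m s)) (at s within {0..})"
      unfolding g_def by (rule has_vector_derivative_scaleR[OF ed md])
    moreover have "exp (lam * s) *\<^sub>R (- lam *\<^sub>R m s) + (exp (lam * s) * lam) *\<^sub>R m s = 0"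
      by (simp add: scaleR_scaleR mult.commute)
    ultimately have "(g has_vector_derivative 0) (at s within {0..})" by simp
    then show ?thesis by (simp add: has_vector_derivative_def)
  qed
  then obtain c where c: "\<forall>x\<in>{0..}. g x = c"
    using has_derivative_zero_constant[of "{0::real..}" g] by (auto simp: convex_real_interval)
  have "g t = g 0" using c t by auto
  then have "exp (lam * t) *\<^sub>R m t = m 0" by (simp add: g_def)
  then have "exp (- (lam * t)) *\<^sub>R (exp (lam * t) *\<^sub>R m t) = exp (- (lam * t)) *\<^sub>R m 0" by simp
  moreover have "exp (- (lam * t)) * exp (lam * t) = 1" by (simp add: exp_add[symmetric])
  ultimately show ?thesis by (simp add: scaleR_scaleR)
qed

lemma lin_ode_exists:
  fixes y :: "'a::real_normed_vector"
  shows "ode_solution (\<lambda>x. - lam *\<^sub>R x) (\<lambda>t. exp (- (lam * t)) *\<^sub>R y)"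
  unfolding ode_solution_def
proof (intro allI impI)
  fix t :: real
  have ed: "((\<lambda>s. exp (- (lam * s))) has_field_derivative (exp (- (lam * t)) * (- lam))) (at t within {0..})"
    by (auto intro!: derivative_eq_intros)
  have D: "((\<lambda>s. exp (- (lam * s)) *\<^sub>R y) has_vector_derivative (exp (- (lam * t)) *\<^sub>R 0 + (exp (- (lam * t)) * (- lam)) *\<^sub>R y)) (at t within {0..})"
    by (rule has_vector_derivative_scaleR[OF ed has_vector_derivative_const])
  have E: "exp (- (lam * t)) *\<^sub>R (0::'a) + (exp (- (lam * t)) * (- lam)) *\<^sub>R y = - lam *\<^sub>R (exp (- (lam * t)) *\<^sub>R y)"
    by (simp add: scaleR_scaleR mult.commute)
  show "((\<lambda>s. exp (- (lam * s)) *\<^sub>R y) has_vector_derivative - lam *\<^sub>R (exp (- (lam * t)) *\<^sub>R y)) (at t within {0..})"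
    using D unfolding E .
qed

theorem proposition3:
  fixes f :: "'a::euclidean_space \<Rightarrow> real" and eps lam :: real
  assumes f_nonneg: "\<And>x. f x \<ge> 0"
    and f_int: "integrable lborel f"
    and f_total: "(\<integral>x. f x \<partial>lborel) = 1"
    and f_moment: "integrable lborel (\<lambda>x. norm x * f x)"
    and eps_pos: "eps > 0"
    and lam_pos: "lam > 0"
  shows "(\<forall>m::'a. \<exists>L. ((\<lambda>c::real. (grad_f_eps eps f (c *\<^sub>R m) - (lam * c) *\<^sub>R m) /\<^sub>R c)
                          \<longlongrightarrow> L) at_top)
       \<and> globally_asymp_stable_eq (h_inf eps lam f) 0
       \<and> (\<forall>x. equilibrium (h_inf eps lam f) x \<longrightarrow> x = 0)"
proof -
  define B where "B = (eps powr (- real DIM('a)) * (2 * pi) powr (- real DIM('a) / 2)) / eps"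
  have lim: "((\<lambda>c::real. (grad_f_eps eps f (c *\<^sub>R m) - (lam * c) *\<^sub>R m) /\<^sub>R c) \<longlongrightarrow> - lam *\<^sub>R m) at_top"
    for m :: 'a
  proof -
    have z: "((\<lambda>c::real. grad_f_eps eps f (c *\<^sub>R m) /\<^sub>R c) \<longlongrightarrow> 0) at_top"
    proof (rule Lim_null_comparison)
      show "\<forall>\<^sub>F c in at_top. norm (grad_f_eps eps f (c *\<^sub>R m) /\<^sub>R c) \<le> B / c"
        using eventually_gt_at_top[of "0::real"]
      proof eventually_elim
        case (elim c)
        have "norm (grad_f_eps eps f (c *\<^sub>R m)) \<le> B"
          unfolding B_def by (rule grad_f_eps_bound[OF f_nonneg f_int f_total eps_pos])
        then show ?case using elim by (simp add: divide_right_mono divide_inverse_commute[symmetric])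
      qed
      show "((\<lambda>c. B / c) \<longlongrightarrow> 0) at_top" by (rule tendsto_divide_0[OF tendsto_const filterlim_at_top_imp_at_infinity[OF filterlim_ident]])
    qed
    have "((\<lambda>c::real. grad_f_eps eps f (c *\<^sub>R m) /\<^sub>R c - lam *\<^sub>R m) \<longlongrightarrow> 0 - lam *\<^sub>R m) at_top"
      by (intro tendsto_diff z tendsto_const)
    then have "((\<lambda>c::real. grad_f_eps eps f (c *\<^sub>R m) /\<^sub>R c - lam *\<^sub>R m) \<longlongrightarrow> - lam *\<^sub>R m) at_top" by simp
    then show ?thesis
    proof (rule Lim_transform_eventually)
      show "\<forall>\<^sub>F c in at_top. grad_f_eps eps f (c *\<^sub>R m) /\<^sub>R c - lam *\<^sub>R m = (grad_f_eps eps f (c *\<^sub>R m) - (lam * c) *\<^sub>R m) /\<^sub>R c"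
        using eventually_gt_at_top[of "0::real"]
        by eventually_elim (simp add: scaleR_diff_right scaleR_scaleR)
    qed
  qed
  have h: "h_inf eps lam f = (\<lambda>m. - lam *\<^sub>R m)"
    unfolding h_inf_def by (rule ext, rule tendsto_Lim[OF trivial_limit_at_top_linorder lim])
  have stab: "lyapunov_stable (h_inf eps lam f) 0"
    unfolding lyapunov_stable_def h
  proof (intro allI impI exI conjI)
    fix e :: real assume e: "e > 0"
    show "e > 0" by fact
    fix m :: "real \<Rightarrow> 'a" and t :: real
    assume a: "ode_solution (\<lambda>x. - lam *\<^sub>R x) m \<and> dist (m 0) 0 < e" and t: "t \<ge> 0"
    have "m t = exp (- (lam * t)) *\<^sub>R m 0" using lin_ode_sol a t by blast
    moreover have "exp (- (lam * t)) \<le> 1" using lam_pos t by simp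
    ultimately have "norm (m t) \<le> norm (m 0)" by (simp add: mult_left_le_one_le)
    then show "dist (m t) 0 < e" using a by simp
  qed
  have attr: "globally_attractive (h_inf eps lam f) 0"
    unfolding globally_attractive_def h
  proof (intro allI impI)
    fix m :: "real \<Rightarrow> 'a" assume a: "ode_solution (\<lambda>x. - lam *\<^sub>R x) m"
    have e0: "((\<lambda>t. exp (- (lam * t))) \<longlongrightarrow> 0) at_top"
    proof -
      have "filterlim (\<lambda>t. lam * t) at_top at_top"
        by (rule filterlim_tendsto_pos_mult_at_top[OF tendsto_const lam_pos filterlim_ident])
      then have "filterlim (\<lambda>t. - (lam * t)) at_bot at_top" by (simp add: filterlim_uminus_at_bot)
      then show ?thesis by (rule filterlim_compose[OF exp_at_bot])
    qed
    have "((\<lambda>t. exp (- (lam * t)) *\<^sub>R m 0) \<longlongrightarrow> 0 *\<^sub>R m 0) at_top"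
      by (intro tendsto_scaleR e0 tendsto_const)
    then have "((\<lambda>t. exp (- (lam * t)) *\<^sub>R m 0) \<longlongrightarrow> 0) at_top" by simp
    then show "(m \<longlongrightarrow> 0) at_top"
    proof (rule Lim_transform_eventually)
      show "\<forall>\<^sub>F t in at_top. exp (- (lam * t)) *\<^sub>R m 0 = m t"
        using eventually_ge_at_top[of "0::real"]
        by eventually_elim (rule lin_ode_sol[OF a, symmetric])
    qed
  qed
  have ex: "\<forall>y. \<exists>m. ode_solution (h_inf eps lam f) m \<and> m 0 = y"
    unfolding h using lin_ode_exists by fastforce
  have eq0: "equilibrium (h_inf eps lam f) 0" unfolding equilibrium_def h by simp
  have uniq: "\<forall>x. equilibrium (h_inf eps lam f) x \<longrightarrow> x = 0"
    unfolding equilibrium_def h using lam_pos by simp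
  show ?thesis
    using lim eq0 stab attr ex uniq unfolding globally_asymp_stable_eq_def by blast
qed

end
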